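(* Let $L>0$, $M\ge1$ an integer, $\Delta x=L/M$, and cells $C_j=[x_{j-\frac12},x_{j+\frac12}]$ with centers $x_j=j\Delta x$, $j\in\{-M,\dots,M\}$. Let $H\in C^1([0,\infty))$, $V:\mathbb{R}\to\mathbb{R}$, and let $(W_k)_{k=-2M}^{2M}$ be real numbers with $W_{-k}=W_k$ for all $k$. Let $t\mapsto(\overline\rho_j(t))_{j=-M}^M$ be a differentiable solution on $(0,\infty)$, with $\overline\rho_j(t)\ge0$, of the ODE system \[ \frac{d\overline\rho_j}{dt}=-\frac{F_{j+\frac12}-F_{j-\frac12}}{\Delta x},\qquad j=-M,\dots,M, \] where at each time: slopes $(\rho_x)_j$ are chosen so that the point values $\rho_j^{\rm E}=\overline\rho_j+\frac{\Delta x}{2}(\rho_x)_j$ and $\rho_j^{\rm W}=\overline\rho_j-\frac{\Delta x}{2}(\rho_x)_j$ are nonnegative; $\xi_j=\Delta x\sum_{i=-M}^{M}W_{j-i}\overline\rho_i+H'(\overline\rho_j)+V(x_j)$; $u_{j+\frac12}=-\frac{\xi_{j+1}-\xi_j}{\Delta x}$, $u^\pm_{j+\frac12}$ its positive part $\max(u_{j+\frac12},0)$ and negative part $\min(u_{j+\frac12},0)$; $F_{j+\frac12}=u_{j+\frac12}^+\rho_j^{\rm E}+u_{j+\frac12}^-\rho_{j+1}^{\rm W}$ for $j=-M,\dots,M-1$; and $F_{-M-\frac12}=F_{M+\frac12}=0$. Define the discrete entropy and entropy dissipation \[ E_\Delta(t)=\Delta x\sum_{j=-M}^{M}\Big[\tfrac12\Delta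 x\sum_{i=-M}^{M}W_{j-i}\overline\rho_i\overline\rho_j+H(\overline\rho_j)+V(x_j)\overline\rho_j\Big],\qquad I_\Delta(t)=\Delta x\sum_{j=-M}^{M-1}\big(u_{j+\frac12}\big)^2\min\big(\rho_j^{\rm E},\rho_{j+1}^{\rm W}\big). \] Then $\frac{d}{dt}E_\Delta(t)\le -I_\Delta(t)$ for all $t>0$.
   Context: This is the one-dimensional semi-discrete finite-volume scheme with no-flux boundary conditions for $\rho_t=\partial_x\big[\rho\,\partial_x\big(H'(\rho)+V(x)+W*\rho\big)\big]$ on $[-L,L]$ with symmetric interaction potential $W$ and $\rho_0\ge0$; $W_{j-i}$ approximates $W(x_j-x_i)$ (e.g. $W_{j-i}=W(x_j-x_i)$), so the symmetry $W_{-k}=W_k$ reflects the symmetry of $W$. $E_\Delta$ is a discrete version of the free energy $E(\rho)=\int H(\rho)+\int V\rho+\frac12\iint W(x-y)\rho(x)\rho(y)$. *)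

theory Defs
  imports "HOL-Analysis.Analysis"
begin

text \<open>Semi-discrete finite-volume scheme. Cell indices j range over the integers
  -M..M; rho j is the cell average, rx j the slope, dx the mesh size.
  The flux F j stands for F at the interface j+1/2.\<close>

definition pt_E :: "real \<Rightarrow> (int \<Rightarrow> real) \<Rightarrow> (int \<Rightarrow> real) \<Rightarrow> int \<Rightarrow> real" where
  "pt_E dx rho rx j = rho j + dx / 2 * rx j"

definition pt_W :: "real \<Rightarrow> (int \<Rightarrow> real) \<Rightarrow> (int \<Rightarrow> real) \<Rightarrow> int \<Rightarrow> real" where
  "pt_W dx rho rx j = rho j - dx / 2 * rx j"

definition xi :: "nat \<Rightarrow> real \<Rightarrow> (int \<Rightarrow> real) \<Rightarrow> (real \<Rightarrow> real) \<Rightarrow> (real \<Rightarrow> real)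
    \<Rightarrow> (int \<Rightarrow> real) \<Rightarrow> int \<Rightarrow> real" where
  "xi M dx W Hp V rho j =
     dx * (\<Sum>i = - int M..int M. W (j - i) * rho i) + Hp (rho j) + V (real_of_int j * dx)"

definition vel :: "nat \<Rightarrow> real \<Rightarrow> (int \<Rightarrow> real) \<Rightarrow> (real \<Rightarrow> real) \<Rightarrow> (real \<Rightarrow> real)
    \<Rightarrow> (int \<Rightarrow> real) \<Rightarrow> int \<Rightarrow> real" where
  "vel M dx W Hp V rho j = - (xi M dx W Hp V rho (j + 1) - xi M dx W Hp V rho j) / dx"

definition flux :: "nat \<Rightarrow> real \<Rightarrow> (int \<Rightarrow> real) \<Rightarrow> (real \<Rightarrow> real) \<Rightarrow> (real \<Rightarrow> real)
    \<Rightarrow> (int \<Rightarrow> real) \<Rightarrow> (int \<Rightarrow> real) \<Rightarrow> int \<Rightarrow> real" where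
  "flux M dx W Hp V rho rx j =
     (if - int M \<le> j \<and> j \<le> int M - 1 then
        max (vel M dx W Hp V rho j) 0 * pt_E dx rho rx j
        + min (vel M dx W Hp V rho j) 0 * pt_W dx rho rx (j + 1)
      else 0)"

definition entropy :: "nat \<Rightarrow> real \<Rightarrow> (int \<Rightarrow> real) \<Rightarrow> (real \<Rightarrow> real) \<Rightarrow> (real \<Rightarrow> real)
    \<Rightarrow> (int \<Rightarrow> real) \<Rightarrow> real" where
  "entropy M dx W H V rho =
     dx * (\<Sum>j = - int M..int M.
        1/2 * dx * (\<Sum>i = - int M..int M. W (j - i) * rho i * rho j)
        + H (rho j) + V (real_of_int j * dx) * rho j)"

definition dissipation :: "nat \<Rightarrow> real \<Rightarrow> (int \<Rightarrow> real) \<Rightarrow> (real \<Rightarrow> real) \<Rightarrow> (real \<Rightarrow> real)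
    \<Rightarrow> (int \<Rightarrow> real) \<Rightarrow> (int \<Rightarrow> real) \<Rightarrow> real" where
  "dissipation M dx W Hp V rho rx =
     dx * (\<Sum>j = - int M..int M - 1.
        (vel M dx W Hp V rho j)\<^sup>2 * min (pt_E dx rho rx j) (pt_W dx rho rx (j + 1)))"

end

theory Submission
  imports Defs
begin

lemma shift_sum_int: "(\<Sum>j = (a::int)..b. f (j - 1)) = (\<Sum>j = a - 1..b - 1. f j)"
  by (rule sum.reindex_bij_witness[of _ "\<lambda>j. j + 1" "\<lambda>j. j - 1"]) auto

lemma split_top_int: "(a::int) \<le> b \<Longrightarrow> (\<Sum>j = a..b. f j) = (\<Sum>j = a..b - 1. f j) + f b"
proof -
  assume "a \<le> b"
  then have "{a..b} = insert b {a..b-1}" by auto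
  then show ?thesis by (simp add: add.commute)
qed

lemma split_bot_int: "(a::int) \<le> b \<Longrightarrow> (\<Sum>j = a..b. f j) = f a + (\<Sum>j = a + 1..b. f j)"
proof -
  assume "a \<le> b"
  then have "{a..b} = insert a {a+1..b}" by auto
  then show ?thesis by simp
qed

theorem theorem2p2:
  fixes L :: real and M :: nat and dx :: real
    and H Hp V :: "real \<Rightarrow> real" and W :: "int \<Rightarrow> real"
    and rho rx :: "real \<Rightarrow> int \<Rightarrow> real"
  assumes L_pos: "L > 0" and M_ge: "M \<ge> 1" and dx_def: "dx = L / real M"
    and H_deriv: "\<And>s. s \<ge> 0 \<Longrightarrow> (H has_real_derivative Hp s) (at s within {0..})"
    and Hp_cont: "continuous_on {0..} Hp"
    and W_sym: "\<And>k. \<bar>k\<bar> \<le> 2 * int M \<Longrightarrow> W (- k) = W k"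
    and rho_nonneg: "\<And>t j. t > 0 \<Longrightarrow> - int M \<le> j \<Longrightarrow> j \<le> int M \<Longrightarrow> rho t j \<ge> 0"
    and E_nonneg: "\<And>t j. t > 0 \<Longrightarrow> - int M \<le> j \<Longrightarrow> j \<le> int M \<Longrightarrow> pt_E dx (rho t) (rx t) j \<ge> 0"
    and W_nonneg: "\<And>t j. t > 0 \<Longrightarrow> - int M \<le> j \<Longrightarrow> j \<le> int M \<Longrightarrow> pt_W dx (rho t) (rx t) j \<ge> 0"
    and ode: "\<And>t j. t > 0 \<Longrightarrow> - int M \<le> j \<Longrightarrow> j \<le> int M \<Longrightarrow>
       ((\<lambda>s. rho s j) has_real_derivative
          - (flux M dx W Hp V (rho t) (rx t) j - flux M dx W Hp V (rho t) (rx t) (j - 1)) / dx) (at t)"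
  shows "\<forall>t > 0. \<exists>D. ((\<lambda>s. entropy M dx W H V (rho s)) has_real_derivative D) (at t)
            \<and> D \<le> - dissipation M dx W Hp V (rho t) (rx t)"
proof (intro allI impI)
  fix t :: real assume t: "t > 0"
  have dx_pos: "dx > 0" using L_pos M_ge dx_def by simp
  define S where "S = {- int M..int M}"
  define r where "r = rho t"
  define F where "F = flux M dx W Hp V (rho t) (rx t)"
  define d where "d j = - (F j - F (j - 1)) / dx" for j
  define x where "x j = xi M dx W Hp V r j" for j
  define u where "u j = vel M dx W Hp V r j" for j
  have der: "\<And>j. j \<in> S \<Longrightarrow> ((\<lambda>s. rho s j) has_real_derivative d j) (at t)"
    using ode t unfolding S_def d_def F_def by auto
  have derH: "((\<lambda>s. H (rho s j)) has_real_derivative Hp (r j) * d j) (at t)" if j: "j \<in> S" for j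
  proof -
    have atw: "at t within {0<..} = at t" by (rule at_within_open) (use t in auto)
    have g: "((\<lambda>s. rho s j) has_real_derivative d j) (at t within {0<..})"
      using der[OF j] by (simp add: atw)
    have img: "(\<lambda>s. rho s j) ` {0<..} \<subseteq> {0..}" using rho_nonneg j unfolding S_def by auto
    have h: "(H has_real_derivative Hp (r j)) (at ((\<lambda>s. rho s j) t) within ((\<lambda>s. rho s j) ` {0<..}))"
    proof -
      have "rho t j \<ge> 0" using rho_nonneg[OF t] j unfolding S_def by simp
      from has_field_derivative_subset[OF H_deriv[OF this] img] show ?thesis by (simp add: r_def)
    qed
    have "(H \<circ> (\<lambda>s. rho s j) has_real_derivative Hp (r j) * d j) (at t within {0<..})"
      by (rule DERIV_image_chain[OF h g])
    then show ?thesis by (simp add: atw o_def)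
  qed
  define D0 where "D0 = dx * (\<Sum>j\<in>S. 1/2 * dx * (\<Sum>i\<in>S. W (j - i) * (d i * r j + r i * d j))
        + Hp (r j) * d j + V (real_of_int j * dx) * d j)"
  have DE: "((\<lambda>s. entropy M dx W H V (rho s)) has_real_derivative D0) (at t)"
    unfolding entropy_def D0_def S_def[symmetric]
    apply (intro DERIV_cmult DERIV_sum DERIV_add DERIV_mult derH)
    apply (auto intro!: derivative_eq_intros der simp: r_def algebra_simps)
    done
  have symm: "(\<Sum>j\<in>S. \<Sum>i\<in>S. W (j - i) * (d i * r j)) = (\<Sum>j\<in>S. \<Sum>i\<in>S. W (j - i) * (r i * d j))"
  proof -
    have "(\<Sum>j\<in>S. \<Sum>i\<in>S. W (j - i) * (d i * r j)) = (\<Sum>i\<in>S. \<Sum>j\<in>S. W (j - i) * (d i * r j))"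
      by (rule sum.swap)
    also have "\<dots> = (\<Sum>i\<in>S. \<Sum>j\<in>S. W (i - j) * (d i * r j))"
    proof (intro sum.cong refl)
      fix i j assume "i \<in> S" "j \<in> S"
      then have "\<bar>i - j\<bar> \<le> 2 * int M" unfolding S_def by auto
      then have "W (- (i - j)) = W (i - j)" by (rule W_sym)
      then show "W (j - i) * (d i * r j) = W (i - j) * (d i * r j)" by simp
    qed
    finally show ?thesis by (simp add: mult_ac)
  qed
  have D0x: "D0 = dx * (\<Sum>j\<in>S. x j * d j)"
  proof -
    have "D0 = dx * (\<Sum>j\<in>S. 1/2 * dx * (\<Sum>i\<in>S. W (j - i) * (d i * r j))
        + 1/2 * dx * (\<Sum>i\<in>S. W (j - i) * (r i * d j)) + Hp (r j) * d j + V (real_of_int j * dx) * d j)"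
      unfolding D0_def by (simp add: algebra_simps sum.distrib sum_distrib_left)
    also have "\<dots> = dx * (1/2 * dx * (\<Sum>j\<in>S. \<Sum>i\<in>S. W (j - i) * (d i * r j))
        + 1/2 * dx * (\<Sum>j\<in>S. \<Sum>i\<in>S. W (j - i) * (r i * d j)) + (\<Sum>j\<in>S. Hp (r j) * d j + V (real_of_int j * dx) * d j))"
      by (simp add: sum.distrib sum_distrib_left add.assoc)
    also have "\<dots> = dx * (dx * (\<Sum>j\<in>S. \<Sum>i\<in>S. W (j - i) * (r i * d j)) + (\<Sum>j\<in>S. Hp (r j) * d j + V (real_of_int j * dx) * d j))"
      unfolding symm by (simp add: algebra_simps)
    also have "\<dots> = dx * (\<Sum>j\<in>S. x j * d j)"
      unfolding x_def xi_def S_def[symmetric]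
      by (simp add: algebra_simps sum.distrib sum_distrib_left sum_distrib_right)
    finally show ?thesis .
  qed
  have Ftop: "F (int M) = 0" and Fbot: "F (- int M - 1) = 0" unfolding F_def flux_def by auto
  have M1: "- int M \<le> int M - 1" using M_ge by simp
  have sbp: "(\<Sum>j\<in>S. x j * (F j - F (j - 1))) = (\<Sum>j = - int M..int M - 1. (x j - x (j + 1)) * F j)"
  proof -
    have "(\<Sum>j\<in>S. x j * (F j - F (j - 1))) = (\<Sum>j\<in>S. x j * F j) - (\<Sum>j\<in>S. x j * F (j - 1))"
      by (simp add: algebra_simps sum_subtractf)
    also have "(\<Sum>j\<in>S. x j * F j) = (\<Sum>j = - int M..int M - 1. x j * F j)"
      unfolding S_def using split_top_int[of "- int M" "int M" "\<lambda>j. x j * F j"] M_ge Ftop by simp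
    also have "(\<Sum>j\<in>S. x j * F (j - 1)) = (\<Sum>j = - int M..int M - 1. x (j + 1) * F j)"
    proof -
      have "(\<Sum>j\<in>S. x j * F (j - 1)) = (\<Sum>j\<in>S. (\<lambda>k. x (k + 1) * F k) (j - 1))" by simp
      also have "\<dots> = (\<Sum>j = - int M - 1..int M - 1. x (j + 1) * F j)"
        unfolding S_def by (rule shift_sum_int)
      also have "\<dots> = (\<Sum>j = - int M..int M - 1. x (j + 1) * F j)"
        using split_bot_int[of "- int M - 1" "int M - 1" "\<lambda>j. x (j + 1) * F j"] M_ge Fbot by simp
      finally show ?thesis .
    qed
    finally show ?thesis by (simp add: algebra_simps sum_subtractf)
  qed
  have D0u: "D0 = - dx * (\<Sum>j = - int M..int M - 1. u j * F j)"
  proof -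
    have "D0 = - (\<Sum>j\<in>S. x j * (F j - F (j - 1)))"
    proof -
      have "dx * (\<Sum>j\<in>S. x j * d j) = (\<Sum>j\<in>S. dx * (x j * d j))" by (rule sum_distrib_left)
      also have "\<dots> = (\<Sum>j\<in>S. - (x j * (F j - F (j - 1))))"
        by (rule sum.cong) (use dx_pos in \<open>auto simp: d_def field_simps\<close>)
      also have "\<dots> = - (\<Sum>j\<in>S. x j * (F j - F (j - 1)))" by (rule sum_negf)
      finally show ?thesis unfolding D0x .
    qed
    also have "\<dots> = - dx * (\<Sum>j = - int M..int M - 1. u j * F j)"
    proof -
      have "- dx * (\<Sum>j = - int M..int M - 1. u j * F j) = (\<Sum>j = - int M..int M - 1. - dx * (u j * F j))"
        by (rule sum_distrib_left)
      also have "\<dots> = (\<Sum>j = - int M..int M - 1. - ((x j - x (j + 1)) * F j))"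
        by (rule sum.cong) (use dx_pos in \<open>auto simp: u_def vel_def x_def field_simps\<close>)
      also have "\<dots> = - (\<Sum>j = - int M..int M - 1. (x j - x (j + 1)) * F j)" by (rule sum_negf)
      finally show ?thesis unfolding sbp by simp
    qed
    finally show ?thesis .
  qed
  have tineq: "u j * F j \<ge> (u j)\<^sup>2 * min (pt_E dx r (rx t) j) (pt_W dx r (rx t) (j + 1))"
    if j: "- int M \<le> j" "j \<le> int M - 1" for j
  proof -
    have E: "pt_E dx r (rx t) j \<ge> 0" and Wn: "pt_W dx r (rx t) (j+1) \<ge> 0"
      using E_nonneg[OF t] W_nonneg[OF t] j unfolding r_def by auto
    have Fj: "F j = max (u j) 0 * pt_E dx r (rx t) j + min (u j) 0 * pt_W dx r (rx t) (j + 1)"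
      unfolding F_def flux_def u_def r_def using j by simp
    show ?thesis
    proof (cases "u j \<ge> 0")
      case True
      have "u j * u j * min (pt_E dx r (rx t) j) (pt_W dx r (rx t) (j + 1)) \<le> u j * u j * pt_E dx r (rx t) j"
        by (rule mult_left_mono) auto
      then show ?thesis unfolding Fj using True by (simp add: power2_eq_square mult.assoc)
    next
      case False
      have "u j * u j * min (pt_E dx r (rx t) j) (pt_W dx r (rx t) (j + 1)) \<le> u j * u j * pt_W dx r (rx t) (j + 1)"
        by (rule mult_left_mono) auto
      then show ?thesis unfolding Fj using False by (simp add: power2_eq_square mult.assoc)
    qed
  qed
  have "D0 \<le> - dissipation M dx W Hp V (rho t) (rx t)"
  proof -
    have "(\<Sum>j = - int M..int M - 1. (u j)\<^sup>2 * min (pt_E dx r (rx t) j) (pt_W dx r (rx t) (j + 1)))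
        \<le> (\<Sum>j = - int M..int M - 1. u j * F j)"
      by (rule sum_mono) (use tineq in auto)
    then have "dx * (\<Sum>j = - int M..int M - 1. (u j)\<^sup>2 * min (pt_E dx r (rx t) j) (pt_W dx r (rx t) (j + 1)))
        \<le> dx * (\<Sum>j = - int M..int M - 1. u j * F j)"
      using dx_pos by (rule mult_left_mono[OF _ less_imp_le])
    then show ?thesis unfolding D0u dissipation_def r_def[symmetric] u_def[symmetric] by simp
  qed
  with DE show "\<exists>D. ((\<lambda>s. entropy M dx W H V (rho s)) has_real_derivative D) (at t)
            \<and> D \<le> - dissipation M dx W Hp V (rho t) (rx t)" by blast
qed

end
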